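(* Let $\varphi:\mathbb{R}^n\to\mathbb{R}$ be of class $\mathcal{C}^{1,1}$ and let $x^0\in\mathbb{R}^n$ be such that, with $\Omega:=\{x\mid\varphi(x)\le\varphi(x^0)\}$, $\partial^2\varphi(x)$ is positive-definite for every $x\in\Omega$ (i.e. $\langle z,u\rangle>0$ for all $u\ne0$, $z\in\partial^2\varphi(x)(u)$) and $\Omega$ is bounded. Then there exists $\kappa>0$ such that for every $x\in\Omega$, $\langle z,w\rangle\ge\kappa\|w\|^2$ whenever $w\in\mathbb{R}^n$ and $z\in\partial^2\varphi(x)(w)$.
   Context: A function $\varphi:\mathbb{R}^n\to\mathbb{R}$ is of class $\mathcal{C}^{1,1}$ if it is continuously differentiable and $\nabla\varphi$ is Lipschitz continuous around every point. Regular normal cone: $\widehat N_\Omega(\bar z):=\{v\mid \limsup_{z\to\bar z,\,z\in\Omega}\langle v,z-\bar z\rangle/\|z-\bar z\|\le 0\}$; limiting normal cone $N_\Omega(\bar z)$: all $v$ with $z_k\to\bar z$, $z_k\in\Omega$, $v_k\to v$, $v_k\in\widehat N_\Omega(z_k)$. Coderivative: $D^*F(\bar x,\bar y)(v):=\{u\mid(u,-v)\in N_{\operatorname{gph}F}(\bar x,\bar y)\}$. $\partial^2\varphi(x)(u):=D^*(\nabla\varphi)(x,\nabla\varphi(x))(u)$. *)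

theory Defs
  imports "HOL-Analysis.Analysis"
begin

definition grad :: "('a::euclidean_space \<Rightarrow> real) \<Rightarrow> 'a \<Rightarrow> 'a" where
  "grad \<phi> x = (THE v. (\<phi> has_derivative (\<lambda>h. v \<bullet> h)) (at x))"

definition C11 :: "('a::euclidean_space \<Rightarrow> real) \<Rightarrow> bool" where
  "C11 \<phi> \<longleftrightarrow> (\<forall>x. (\<phi> has_derivative (\<lambda>h. grad \<phi> x \<bullet> h)) (at x))
     \<and> continuous_on UNIV (grad \<phi>)
     \<and> (\<forall>x. \<exists>e>0. \<exists>L. L-lipschitz_on (ball x e) (grad \<phi>))"

text \<open>Regular normal cone (limsup condition unfolded).\<close>
definition reg_normal_cone :: "'a::real_inner set \<Rightarrow> 'a \<Rightarrow> 'a set" where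
  "reg_normal_cone \<Omega> zb = {v. zb \<in> \<Omega> \<and>
     (\<forall>\<epsilon>>0. \<exists>\<delta>>0. \<forall>z\<in>\<Omega>. 0 < norm (z - zb) \<and> norm (z - zb) < \<delta> \<longrightarrow>
        v \<bullet> (z - zb) \<le> \<epsilon> * norm (z - zb))}"

definition lim_normal_cone :: "'a::real_inner set \<Rightarrow> 'a \<Rightarrow> 'a set" where
  "lim_normal_cone \<Omega> zb = {v. \<exists>z vs. z \<longlonglongrightarrow> zb \<and> (\<forall>k. z k \<in> \<Omega>) \<and> vs \<longlonglongrightarrow> v
      \<and> (\<forall>k. vs k \<in> reg_normal_cone \<Omega> (z k))}"

definition graph :: "('a \<Rightarrow> 'b set) \<Rightarrow> ('a \<times> 'b) set" where
  "graph F = {(x, y). y \<in> F x}"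

definition coderiv :: "('a::real_inner \<Rightarrow> 'b::real_inner set) \<Rightarrow> 'a \<Rightarrow> 'b \<Rightarrow> 'b \<Rightarrow> 'a set" where
  "coderiv F xb yb v = {u. (u, - v) \<in> lim_normal_cone (graph F) (xb, yb)}"

definition second_subdiff :: "('a::euclidean_space \<Rightarrow> real) \<Rightarrow> 'a \<Rightarrow> 'a \<Rightarrow> 'a set" where
  "second_subdiff \<phi> x u = coderiv (\<lambda>y. {grad \<phi> y}) x (grad \<phi> x) u"

end

theory Submission
  imports Defs
begin

lemma reg_cone_scale:
  assumes "v \<in> reg_normal_cone S p" "c > 0"
  shows "c *\<^sub>R v \<in> reg_normal_cone S p"
proof -
  have pS: "p \<in> S" using assms(1) by (simp add: reg_normal_cone_def)
  show ?thesis unfolding reg_normal_cone_def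
  proof (intro CollectI conjI pS allI impI)
    fix \<epsilon> :: real assume "\<epsilon> > 0"
    then have "\<epsilon> / c > 0" using assms(2) by simp
    then obtain \<delta> where d: "\<delta> > 0" "\<forall>z\<in>S. 0 < norm (z - p) \<and> norm (z - p) < \<delta> \<longrightarrow>
        v \<bullet> (z - p) \<le> (\<epsilon> / c) * norm (z - p)"
      using assms(1) unfolding reg_normal_cone_def by blast
    show "\<exists>\<delta>>0. \<forall>z\<in>S. 0 < norm (z - p) \<and> norm (z - p) < \<delta> \<longrightarrow>
        (c *\<^sub>R v) \<bullet> (z - p) \<le> \<epsilon> * norm (z - p)"
    proof (intro exI[of _ \<delta>] conjI d(1) ballI impI)
      fix z assume "z \<in> S" "0 < norm (z - p) \<and> norm (z - p) < \<delta>"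
      then have "v \<bullet> (z - p) \<le> (\<epsilon> / c) * norm (z - p)" using d(2) by blast
      then have "c * (v \<bullet> (z - p)) \<le> c * ((\<epsilon> / c) * norm (z - p))"
        using assms(2) mult_left_mono by (metis less_eq_real_def)
      moreover have "c * ((\<epsilon> / c) * norm (z - p)) = \<epsilon> * norm (z - p)" using assms(2) by simp
      ultimately show "(c *\<^sub>R v) \<bullet> (z - p) \<le> \<epsilon> * norm (z - p)"
        using assms(2) by simp
    qed
  qed
qed

lemma graph_single: "graph (\<lambda>y. {g y}) = {(x, y). y = g x}"
  by (auto simp: graph_def)

lemma reg_normal_lip_bound:
  fixes g :: "'a::euclidean_space \<Rightarrow> 'a"
  assumes lip: "L-lipschitz_on (ball y e) g" and e: "e > 0"
    and rn: "(a, -b) \<in> reg_normal_cone (graph (\<lambda>y. {g y})) (y, g y)"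
  shows "norm a \<le> L * norm b"
proof (rule ccontr)
  assume "\<not> ?thesis"
  then have gt: "norm a > L * norm b" by simp
  have L0: "L \<ge> 0" using lip by (rule lipschitz_on_nonneg)
  have a0: "norm a > 0" using gt L0 by (smt (verit) mult_nonneg_nonneg norm_ge_zero)
  define \<epsilon> where "\<epsilon> = (norm a - L * norm b) / (2 * (1 + L))"
  have ep: "\<epsilon> > 0" using gt L0 by (simp add: \<epsilon>_def)
  obtain \<delta> where d: "\<delta> > 0" "\<forall>z\<in>graph (\<lambda>y. {g y}). 0 < norm (z - (y, g y)) \<and> norm (z - (y, g y)) < \<delta> \<longrightarrow>
        (a, -b) \<bullet> (z - (y, g y)) \<le> \<epsilon> * norm (z - (y, g y))"
    using rn ep unfolding reg_normal_cone_def by blast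
  define t where "t = min e \<delta> / (2 * (1 + L) * norm a)"
  have t0: "t > 0" using e d(1) a0 L0 by (simp add: t_def)
  have kpos: "2 * (1 + L) * norm a \<noteq> 0" using a0 L0 by simp
  have "t * norm a * (1 + L) = min e \<delta> * ((1 + L) * norm a) / (2 * (1 + L) * norm a)"
    by (simp add: t_def)
  also have "\<dots> = min e \<delta> / 2" using kpos by (simp add: field_simps)
  finally have "t * norm a * (1 + L) = min e \<delta> / 2" .
  moreover have "min e \<delta> > 0" using e d(1) by simp
  ultimately have tae: "t * norm a * (1 + L) < min e \<delta>"
    by linarith
  have te: "t * norm a < e"
  proof -
    have "t * norm a \<le> t * norm a * (1 + L)" using t0 a0 L0 by simp
    then show ?thesis using tae by simp
  qed
  define y' where "y' = y + t *\<^sub>R a"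
  have yb: "y' \<in> ball y e" using te t0 by (simp add: y'_def dist_norm)
  have yyb: "y \<in> ball y e" using e by simp
  have Lg: "norm (g y' - g y) \<le> L * (t * norm a)"
    using lipschitz_on_normD[OF lip yb yyb] t0 by (simp add: y'_def)
  define z where "z = (y', g y')"
  have zG: "z \<in> graph (\<lambda>y. {g y})" by (simp add: z_def graph_def)
  have zd: "z - (y, g y) = (t *\<^sub>R a, g y' - g y)" by (simp add: z_def y'_def)
  have nz_pos: "0 < norm (z - (y, g y))"
  proof -
    have "0 < t * norm a" using t0 a0 by simp
    also have "\<dots> \<le> norm (z - (y, g y))" using zd norm_fst_le[of "t *\<^sub>R a" "g y' - g y"] t0 by simp
    finally show ?thesis .
  qed
  have nz_le: "norm (z - (y, g y)) \<le> t * norm a * (1 + L)"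
  proof -
    have "norm (z - (y, g y)) \<le> norm (t *\<^sub>R a) + norm (g y' - g y)"
      using zd norm_Pair_le by metis
    also have "\<dots> \<le> t * norm a + L * (t * norm a)" using Lg t0 by simp
    finally show ?thesis by (simp add: algebra_simps)
  qed
  have nz_d: "norm (z - (y, g y)) < \<delta>" using nz_le tae by simp
  have ineq: "(a, -b) \<bullet> (z - (y, g y)) \<le> \<epsilon> * norm (z - (y, g y))"
    using d(2) zG nz_pos nz_d by blast
  have lhs: "(a, -b) \<bullet> (z - (y, g y)) = t * (norm a)^2 - b \<bullet> (g y' - g y)"
    using zd by (simp add: power2_norm_eq_inner)
  have bb: "b \<bullet> (g y' - g y) \<le> norm b * (L * (t * norm a))"
    using Cauchy_Schwarz_ineq2[of b "g y' - g y"] Lg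
    by (smt (verit) mult_left_mono norm_ge_zero)
  have "t * (norm a)^2 - norm b * (L * (t * norm a)) \<le> \<epsilon> * (t * norm a * (1 + L))"
    using ineq lhs bb nz_le ep
    by (smt (verit) mult_left_mono)
  then have "t * norm a * (norm a - L * norm b) \<le> t * norm a * (\<epsilon> * (1 + L))"
    by (simp add: algebra_simps power2_eq_square)
  then have "norm a - L * norm b \<le> \<epsilon> * (1 + L)"
    using t0 a0 by (simp add: mult_le_cancel_left)
  moreover have "\<epsilon> * (1 + L) = (norm a - L * norm b) / 2"
  proof -
    have "1 + L \<noteq> 0" using L0 by simp
    then show ?thesis by (simp add: \<epsilon>_def field_simps)
  qed
  ultimately show False using gt by simp
qed

theorem lemma3p6:
  fixes \<phi> :: "'a::euclidean_space \<Rightarrow> real" and x0 :: 'a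
  assumes "C11 \<phi>"
    and "\<forall>x\<in>{x. \<phi> x \<le> \<phi> x0}. \<forall>u z. u \<noteq> 0 \<and> z \<in> second_subdiff \<phi> x u \<longrightarrow> z \<bullet> u > 0"
    and "bounded {x. \<phi> x \<le> \<phi> x0}"
  shows "\<exists>\<kappa>>0. \<forall>x\<in>{x. \<phi> x \<le> \<phi> x0}. \<forall>w z. z \<in> second_subdiff \<phi> x w \<longrightarrow>
            z \<bullet> w \<ge> \<kappa> * (norm w)\<^sup>2"
proof (rule ccontr)
  assume neg: "\<not> ?thesis"
  define \<Omega> where "\<Omega> = {x. \<phi> x \<le> \<phi> x0}"
  define g where "g = grad \<phi>"
  define G where "G = graph (\<lambda>y. {g y})"
  have C: "\<forall>x. (\<phi> has_derivative (\<lambda>h. grad \<phi> x \<bullet> h)) (at x)"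
    "continuous_on UNIV (grad \<phi>)"
    "\<forall>x. \<exists>e>0. \<exists>L. L-lipschitz_on (ball x e) (grad \<phi>)"
    using assms(1) unfolding C11_def by auto
  have gc: "continuous_on UNIV g" using C(2) by (simp add: g_def)
  have phic: "continuous_on UNIV \<phi>"
    using C(1) has_derivative_continuous continuous_at_imp_continuous_on by blast
  have "closed \<Omega>" unfolding \<Omega>_def
    by (rule closed_Collect_le[OF phic continuous_on_const])
  then have cpt: "compact \<Omega>" using assms(3) \<Omega>_def compact_eq_bounded_closed by blast
  have Gmem: "\<And>p. p \<in> G \<longleftrightarrow> snd p = g (fst p)"
    by (auto simp: G_def graph_def)
  have step: "\<exists>y a b x. x \<in> \<Omega> \<and> dist y x < 1 / Suc n \<and> (a, -b) \<in> reg_normal_cone G (y, g y)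
      \<and> \<bar>norm b - 1\<bar> < 1 / Suc n \<and> a \<bullet> b < 2 / Suc n" for n :: nat
  proof -
    define \<delta> :: real where "\<delta> = 1 / Suc n"
    have dpos: "\<delta> > 0" by (simp add: \<delta>_def)
    obtain x w z where xO: "x \<in> \<Omega>" and zs: "z \<in> second_subdiff \<phi> x w"
      and lt: "z \<bullet> w < \<delta> * (norm w)\<^sup>2"
      using neg dpos unfolding \<Omega>_def by (meson not_le)
    have w0: "w \<noteq> 0" using lt by auto
    have nw: "norm w > 0" using w0 by simp
    have "(z, - w) \<in> lim_normal_cone G (x, g x)"
      using zs by (simp add: second_subdiff_def coderiv_def G_def g_def)
    then obtain zq vs where zq: "zq \<longlonglongrightarrow> (x, g x)" "\<forall>k. zq k \<in> G"
      and vs: "vs \<longlonglongrightarrow> (z, -w)" "\<forall>k. vs k \<in> reg_normal_cone G (zq k)"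
      unfolding lim_normal_cone_def by blast
    have t1: "(\<lambda>k. fst (zq k)) \<longlonglongrightarrow> x" using tendsto_fst[OF zq(1)] by simp
    have t2: "(\<lambda>k. snd (vs k) + w) \<longlonglongrightarrow> 0"
      using tendsto_add[OF tendsto_snd[OF vs(1)] tendsto_const[of w]] by simp
    have t3: "(\<lambda>k. fst (vs k) \<bullet> (- snd (vs k))) \<longlonglongrightarrow> z \<bullet> w"
      using tendsto_inner[OF tendsto_fst[OF vs(1)] tendsto_minus[OF tendsto_snd[OF vs(1)]]] by simp
    have e1: "\<forall>\<^sub>F k in sequentially. dist (fst (zq k)) x < \<delta>"
      using t1 dpos by (simp add: tendsto_iff)
    have e2: "\<forall>\<^sub>F k in sequentially. norm (snd (vs k) + w) < \<delta> * norm w"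
      using t2 dpos nw by (simp add: tendsto_iff dist_norm)
    have e3: "\<forall>\<^sub>F k in sequentially. fst (vs k) \<bullet> (- snd (vs k)) < z \<bullet> w + \<delta> * (norm w)\<^sup>2"
      using order_tendstoD(2)[OF t3, of "z \<bullet> w + \<delta> * (norm w)\<^sup>2"] dpos nw by simp
    obtain k where k1: "dist (fst (zq k)) x < \<delta>" and k2: "norm (snd (vs k) + w) < \<delta> * norm w"
      and k3: "fst (vs k) \<bullet> (- snd (vs k)) < z \<bullet> w + \<delta> * (norm w)\<^sup>2"
      using eventually_happens'[OF _ eventually_conj[OF e1 eventually_conj[OF e2 e3]]] by auto
    define y where "y = fst (zq k)"
    define a0 where "a0 = fst (vs k)"
    define b0 where "b0 = - snd (vs k)"
    define c where "c = 1 / norm w"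
    have cpos: "c > 0" using nw by (simp add: c_def)
    have zqk: "zq k = (y, g y)" using zq(2) Gmem y_def by (metis prod.collapse)
    have vsk: "vs k = (a0, - b0)" by (simp add: a0_def b0_def)
    have rn: "(c *\<^sub>R a0, - (c *\<^sub>R b0)) \<in> reg_normal_cone G (y, g y)"
      using reg_cone_scale[OF vs(2)[rule_format, of k] cpos] zqk vsk by simp
    have nb: "norm (b0 - w) < \<delta> * norm w"
      using k2 by (simp add: b0_def norm_minus_commute[of "- snd (vs k)" w] algebra_simps)
    have "\<bar>norm b0 - norm w\<bar> < \<delta> * norm w"
      using norm_triangle_ineq3[of b0 w] nb by linarith
    then have "c * \<bar>norm b0 - norm w\<bar> < c * (\<delta> * norm w)"
      using cpos by simp
    then have nb2: "\<bar>norm (c *\<^sub>R b0) - 1\<bar> < \<delta>"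
      using cpos nw by (simp add: c_def abs_mult[symmetric] field_simps abs_div)
    have "a0 \<bullet> b0 < 2 * \<delta> * (norm w)\<^sup>2" using k3 lt by (simp add: a0_def b0_def)
    then have "c * c * (a0 \<bullet> b0) < c * c * (2 * \<delta> * (norm w)\<^sup>2)"
      using cpos by simp
    then have ab: "(c *\<^sub>R a0) \<bullet> (c *\<^sub>R b0) < 2 * \<delta>"
      using nw by (simp add: c_def power2_eq_square field_simps)
    have "\<exists>y a b x. x \<in> \<Omega> \<and> dist y x < \<delta> \<and> (a, -b) \<in> reg_normal_cone G (y, g y)
      \<and> \<bar>norm b - 1\<bar> < \<delta> \<and> a \<bullet> b < 2 * \<delta>"
      using xO k1 rn nb2 ab unfolding y_def[symmetric] by blast
    then show ?thesis by (simp add: \<delta>_def)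
  qed
  obtain Y A B X where YABX: "\<And>n. X n \<in> \<Omega> \<and> dist (Y n) (X n) < 1 / Suc n
      \<and> (A n, - B n) \<in> reg_normal_cone G (Y n, g (Y n))
      \<and> \<bar>norm (B n) - 1\<bar> < 1 / Suc n \<and> A n \<bullet> B n < 2 / Suc n"
  proof -
    have "\<forall>n. \<exists>y a b x. x \<in> \<Omega> \<and> dist y x < 1 / Suc n \<and> (a, -b) \<in> reg_normal_cone G (y, g y)
      \<and> \<bar>norm b - 1\<bar> < 1 / Suc n \<and> a \<bullet> b < 2 / Suc n" using step by blast
    then obtain Y where "\<forall>n. \<exists>a b x. x \<in> \<Omega> \<and> dist (Y n) x < 1 / Suc n \<and> (a, -b) \<in> reg_normal_cone G (Y n, g (Y n))
      \<and> \<bar>norm b - 1\<bar> < 1 / Suc n \<and> a \<bullet> b < 2 / Suc n" using choice[of "\<lambda>n y. \<exists>a b x. x \<in> \<Omega> \<and> dist y x < 1 / Suc n \<and> (a, -b) \<in> reg_normal_cone G (y, g y)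
      \<and> \<bar>norm b - 1\<bar> < 1 / Suc n \<and> a \<bullet> b < 2 / Suc n"] by blast
    then obtain A where "\<forall>n. \<exists>b x. x \<in> \<Omega> \<and> dist (Y n) x < 1 / Suc n \<and> (A n, -b) \<in> reg_normal_cone G (Y n, g (Y n))
      \<and> \<bar>norm b - 1\<bar> < 1 / Suc n \<and> A n \<bullet> b < 2 / Suc n" using choice[of "\<lambda>n a. \<exists>b x. x \<in> \<Omega> \<and> dist (Y n) x < 1 / Suc n \<and> (a, -b) \<in> reg_normal_cone G (Y n, g (Y n))
      \<and> \<bar>norm b - 1\<bar> < 1 / Suc n \<and> a \<bullet> b < 2 / Suc n"] by blast
    then obtain B where "\<forall>n. \<exists>x. x \<in> \<Omega> \<and> dist (Y n) x < 1 / Suc n \<and> (A n, - B n) \<in> reg_normal_cone G (Y n, g (Y n))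
      \<and> \<bar>norm (B n) - 1\<bar> < 1 / Suc n \<and> A n \<bullet> B n < 2 / Suc n" using choice[of "\<lambda>n b. \<exists>x. x \<in> \<Omega> \<and> dist (Y n) x < 1 / Suc n \<and> (A n, -b) \<in> reg_normal_cone G (Y n, g (Y n))
      \<and> \<bar>norm b - 1\<bar> < 1 / Suc n \<and> A n \<bullet> b < 2 / Suc n"] by blast
    then obtain X where "\<forall>n. X n \<in> \<Omega> \<and> dist (Y n) (X n) < 1 / Suc n \<and> (A n, - B n) \<in> reg_normal_cone G (Y n, g (Y n))
      \<and> \<bar>norm (B n) - 1\<bar> < 1 / Suc n \<and> A n \<bullet> B n < 2 / Suc n" using choice[of "\<lambda>n x. x \<in> \<Omega> \<and> dist (Y n) x < 1 / Suc n \<and> (A n, - B n) \<in> reg_normal_cone G (Y n, g (Y n))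
      \<and> \<bar>norm (B n) - 1\<bar> < 1 / Suc n \<and> A n \<bullet> B n < 2 / Suc n"] by blast
    then show ?thesis using that by blast
  qed
  have XO: "\<forall>n. X n \<in> \<Omega>" using YABX by blast
  obtain xb r where xbO: "xb \<in> \<Omega>" and r: "strict_mono r" and Xr: "(X \<circ> r) \<longlonglongrightarrow> xb"
  proof -
    have "seq_compact \<Omega>" by (rule compact_imp_seq_compact[OF cpt])
    then have "\<exists>l\<in>\<Omega>. \<exists>r. strict_mono r \<and> (X \<circ> r) \<longlonglongrightarrow> l"
      using XO unfolding seq_compact_def by blast
    then show ?thesis using that by blast
  qed
  have inv0: "(\<lambda>n. 1 / real (Suc n)) \<longlonglongrightarrow> 0"
    using LIMSEQ_inverse_real_of_nat by (simp add: inverse_eq_divide)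
  have subq: "1 / real (Suc (q n)) \<le> 1 / real (Suc n)" if "strict_mono q" for q n
    using seq_suble[OF that, of n] by (simp add: frac_le)
  have Yr: "(Y \<circ> r) \<longlonglongrightarrow> xb"
  proof -
    have d1: "(\<lambda>n. dist (X (r n)) xb) \<longlonglongrightarrow> 0"
      using Xr tendsto_dist_iff[THEN iffD1, of "X \<circ> r" xb sequentially] by (simp add: o_def)
    have "(\<lambda>n. 1 / real (Suc n) + dist (X (r n)) xb) \<longlonglongrightarrow> 0 + 0"
      by (rule tendsto_add[OF inv0 d1])
    moreover have "dist (Y (r n)) xb \<le> 1 / real (Suc n) + dist (X (r n)) xb" for n
    proof -
      have "dist (Y (r n)) xb \<le> dist (Y (r n)) (X (r n)) + dist (X (r n)) xb"
        by (rule dist_triangle)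
      moreover have "dist (Y (r n)) (X (r n)) < 1 / real (Suc (r n))" using YABX by blast
      ultimately show ?thesis using subq[OF r, of n] by linarith
    qed
    ultimately have "(\<lambda>n. dist (Y (r n)) xb) \<longlonglongrightarrow> 0"
      by (intro real_tendsto_sandwich[of "\<lambda>n. 0" "\<lambda>n. dist (Y (r n)) xb" _ "\<lambda>n. 1 / real (Suc n) + dist (X (r n)) xb"])
        (simp_all add: always_eventually)
    then show ?thesis using tendsto_dist_iff[THEN iffD2, of "Y \<circ> r" xb sequentially] by (simp add: o_def)
  qed
  obtain e L where e: "e > 0" and lip: "L-lipschitz_on (ball xb e) g"
    using C(3) g_def by blast
  have "\<forall>\<^sub>F n in sequentially. dist (Y (r n)) xb < e / 2"
  proof -
    have "e / 2 > 0" using e by simp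
    then show ?thesis using Yr unfolding tendsto_iff o_def by blast
  qed
  then obtain N where N: "\<And>n. n \<ge> N \<Longrightarrow> dist (Y (r n)) xb < e / 2"
    unfolding eventually_sequentially by blast
  have bndA: "norm (A (r n)) \<le> L * 2" and bndB: "norm (B (r n)) \<le> 2" if "n \<ge> N" for n
  proof -
    have "ball (Y (r n)) (e / 2) \<subseteq> ball xb e"
    proof
      fix u assume "u \<in> ball (Y (r n)) (e / 2)"
      then have "dist (Y (r n)) u < e / 2" by simp
      moreover have "dist xb (Y (r n)) < e / 2" using N[OF that] by (simp add: dist_commute)
      ultimately show "u \<in> ball xb e" using dist_triangle[of xb u "Y (r n)"] by simp
    qed
    then have "L-lipschitz_on (ball (Y (r n)) (e / 2)) g" using lip lipschitz_on_subset by blast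
    moreover have "(A (r n), - B (r n)) \<in> reg_normal_cone (graph (\<lambda>y. {g y})) (Y (r n), g (Y (r n)))"
      using YABX G_def by blast
    ultimately have a: "norm (A (r n)) \<le> L * norm (B (r n))"
      using reg_normal_lip_bound e by (metis half_gt_zero)
    have "\<bar>norm (B (r n)) - 1\<bar> < 1 / Suc (r n)" using YABX by blast
    moreover have "1 / real (Suc (r n)) \<le> 1" by simp
    ultimately show "norm (B (r n)) \<le> 2" by linarith
    then show "norm (A (r n)) \<le> L * 2"
      using a lipschitz_on_nonneg[OF lip] mult_left_mono[of "norm (B (r n))" 2 L] by linarith
  qed
  define p0 where "p0 = (\<lambda>n::nat. n + N)"
  have p0: "strict_mono p0" by (simp add: p0_def strict_mono_def)
  define F where "F = (\<lambda>n. (A (r (p0 n)), B (r (p0 n))))"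
  have "bounded (range F)"
  proof -
    have "norm (F n) \<le> L * 2 + 2" for n
    proof -
      have "norm (F n) \<le> norm (A (r (p0 n))) + norm (B (r (p0 n)))"
        unfolding F_def by (rule norm_Pair_le)
      then show ?thesis using bndA[of "p0 n"] bndB[of "p0 n"] by (simp add: p0_def)
    qed
    then show ?thesis by (auto simp: bounded_iff)
  qed
  then obtain l s where s: "strict_mono s" and Fs: "(F \<circ> s) \<longlonglongrightarrow> l"
    using bounded_imp_convergent_subsequence by blast
  define ab where "ab = fst l"
  define bb where "bb = snd l"
  define q where "q = r \<circ> p0 \<circ> s"
  have q: "strict_mono q" unfolding q_def
    using r p0 s strict_mono_o by blast
  have Aq: "(\<lambda>n. A (q n)) \<longlonglongrightarrow> ab"
    using tendsto_fst[OF Fs] by (simp add: ab_def q_def F_def o_def)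
  have Bq: "(\<lambda>n. B (q n)) \<longlonglongrightarrow> bb"
    using tendsto_snd[OF Fs] by (simp add: bb_def q_def F_def o_def)
  have Yq: "(\<lambda>n. Y (q n)) \<longlonglongrightarrow> xb"
  proof -
    have "strict_mono (p0 \<circ> s)" using p0 s strict_mono_o by blast
    from LIMSEQ_subseq_LIMSEQ[OF Yr this] show ?thesis by (simp add: q_def o_def)
  qed
  have gq: "(\<lambda>n. g (Y (q n))) \<longlonglongrightarrow> g xb"
  proof -
    have "isCont g xb" using gc by (simp add: continuous_on_eq_continuous_at)
    then show ?thesis by (rule isCont_tendsto_compose[OF _ Yq])
  qed
  have lim: "(ab, - bb) \<in> lim_normal_cone G (xb, g xb)"
    unfolding lim_normal_cone_def
  proof (intro CollectI exI conjI allI)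
    show "(\<lambda>n. (Y (q n), g (Y (q n)))) \<longlonglongrightarrow> (xb, g xb)"
      by (rule tendsto_Pair[OF Yq gq])
    show "(\<lambda>n. (A (q n), - B (q n))) \<longlonglongrightarrow> (ab, - bb)"
      by (rule tendsto_Pair[OF Aq tendsto_minus[OF Bq]])
    fix k
    show "(Y (q k), g (Y (q k))) \<in> G" by (simp add: Gmem)
    show "(A (q k), - B (q k)) \<in> reg_normal_cone G (Y (q k), g (Y (q k)))"
      using YABX by blast
  qed
  then have ssd: "ab \<in> second_subdiff \<phi> xb bb"
    by (simp add: second_subdiff_def coderiv_def G_def g_def)
  have nb1: "norm bb = 1"
  proof -
    have t1: "(\<lambda>n. norm (B (q n))) \<longlonglongrightarrow> norm bb" by (rule tendsto_norm[OF Bq])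
    have "(\<lambda>n. norm (B (q n))) \<longlonglongrightarrow> 1"
    proof -
      have "(\<lambda>n. 1 + 1 / real (Suc n)) \<longlonglongrightarrow> 1 + 0" by (rule tendsto_add[OF tendsto_const inv0])
      moreover have "(\<lambda>n. 1 - 1 / real (Suc n)) \<longlonglongrightarrow> 1 - 0" by (rule tendsto_diff[OF tendsto_const inv0])
      moreover have "\<bar>norm (B (q n)) - 1\<bar> \<le> 1 / real (Suc n)" for n
        using YABX[of "q n"] subq[OF q, of n] by linarith
      ultimately show ?thesis
      proof (intro real_tendsto_sandwich[of "\<lambda>n. 1 - 1 / real (Suc n)" "\<lambda>n. norm (B (q n))"
            _ "\<lambda>n. 1 + 1 / real (Suc n)"])
        assume h: "\<And>n. \<bar>norm (B (q n)) - 1\<bar> \<le> 1 / real (Suc n)"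
        have "1 - 1 / real (Suc n) \<le> norm (B (q n))" for n using h[of n] unfolding abs_le_iff by linarith
        then show "\<forall>\<^sub>F n in sequentially. 1 - 1 / real (Suc n) \<le> norm (B (q n))" by (intro always_eventually allI)
        have "norm (B (q n)) \<le> 1 + 1 / real (Suc n)" for n using h[of n] unfolding abs_le_iff by linarith
        then show "\<forall>\<^sub>F n in sequentially. norm (B (q n)) \<le> 1 + 1 / real (Suc n)" by (intro always_eventually allI)
      qed auto
    qed
    then show ?thesis using t1 LIMSEQ_unique by blast
  qed
  have le0: "ab \<bullet> bb \<le> 0"
  proof -
    have t: "(\<lambda>n. A (q n) \<bullet> B (q n)) \<longlonglongrightarrow> ab \<bullet> bb" by (rule tendsto_inner[OF Aq Bq])
    have t2: "(\<lambda>n. 2 * (1 / real (Suc n))) \<longlonglongrightarrow> 2 * 0" by (rule tendsto_mult[OF tendsto_const inv0])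
    have "A (q n) \<bullet> B (q n) \<le> 2 * (1 / real (Suc n))" for n
      using YABX[of "q n"] subq[OF q, of n] by simp
    then have "ab \<bullet> bb \<le> 2 * 0"
      using tendsto_le[OF _ t2 t] by simp
    then show ?thesis by simp
  qed
  have "ab \<bullet> bb > 0"
  proof -
    have "bb \<noteq> 0" using nb1 by auto
    moreover have "xb \<in> {x. \<phi> x \<le> \<phi> x0}" using xbO by (simp add: \<Omega>_def)
    ultimately show ?thesis using assms(2) ssd by blast
  qed
  then show False using le0 by simp
qed

end
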